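(* Let $(S,\mathcal{S})$ be a measurable space and let $\mathcal{E}\subseteq\mathcal{P}(S)$ be a $\cap$-stable collection with $\sigma(\mathcal{E})=\mathcal{S}$, $\emptyset\in\mathcal{E}$ and $\mathcal{E}\subseteq (\mathcal{E}_{int})_{\sigma}$. If $\pi$ is a constructive cr-set, then for every $A\in\mathcal{S}$ there exist $K\in (\mathcal{E}_{int})_{\sigma}$ and $L\in(\mathcal{E}_{ext})_{\delta}$ with $K\subseteq A\subseteq L$ and $T_{\pi}(L\setminus K)=0$.
   Context: $(\Omega,\mathcal{F},P)$ is a probability space; $C(S)$ is the set of countable subsets of $S$; $N_A(M)=|A\cap M|$; $\mathcal{C}(\mathcal{S})=\sigma(N_A\mid A\in\mathcal{S})$; a cr-set is an $\mathcal{F}$-$\mathcal{C}(\mathcal{S})$ measurable map $\pi:\Omega\to C(S)$, finite if its values are finite; a map $\tau:\Omega\to C(S)$ is constructive if $\tau(\omega)=\bigcup_k\pi_k(\omega)$ for all $\omega$ for some finite cr-sets $\pi_k$, $k\in\mathbb{N}$. The hitting function is $T_\pi(A)=P(\pi\cap A\neq\emptyset)$, $A\in\mathcal{S}$. For a nonempty family $\mathcal{E}$: $\mathcal{E}_\sigma$ (resp. $\mathcal{E}_\delta$) is the family of countable unions (resp. intersections) of $\mathcal{E}$-sets, the empty union/intersection not included; $\mathcal{E}_{ext}=\mathcal{E}_\sigma$; $\mathcal{E}_{int}=\{\bigcap_n (S\setminus E_n)\mid E_n\in\mathcal{E}\}$. *)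

theory Defs
  imports "HOL-Probability.Probability"
begin

definition csets :: "'a set \<Rightarrow> 'a set set" where
  "csets S = {X. X \<subseteq> S \<and> countable X}"

definition Ncount :: "'a set \<Rightarrow> 'a set \<Rightarrow> enat" where
  "Ncount A X = (if finite (A \<inter> X) then enat (card (A \<inter> X)) else \<infinity>)"

definition cr_space :: "'a measure \<Rightarrow> 'a set measure" where
  "cr_space M = sigma (csets (space M))
     {Ncount A -` B \<inter> csets (space M) | A B. A \<in> sets M}"

definition cr_set :: "'w measure \<Rightarrow> 'a measure \<Rightarrow> ('w \<Rightarrow> 'a set) \<Rightarrow> bool" where
  "cr_set P M \<pi> \<longleftrightarrow> \<pi> \<in> measurable P (cr_space M)"

definition finite_cr_set :: "'w measure \<Rightarrow> 'a measure \<Rightarrow> ('w \<Rightarrow> 'a set) \<Rightarrow> bool" where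
  "finite_cr_set P M \<pi> \<longleftrightarrow> cr_set P M \<pi> \<and> (\<forall>\<omega>\<in>space P. finite (\<pi> \<omega>))"

definition constructive :: "'w measure \<Rightarrow> 'a measure \<Rightarrow> ('w \<Rightarrow> 'a set) \<Rightarrow> bool" where
  "constructive P M \<tau> \<longleftrightarrow>
     (\<exists>\<pi>s :: nat \<Rightarrow> 'w \<Rightarrow> 'a set. (\<forall>k. finite_cr_set P M (\<pi>s k)) \<and>
        (\<forall>\<omega>\<in>space P. \<tau> \<omega> = (\<Union>k. \<pi>s k \<omega>)))"

definition hitting :: "'w measure \<Rightarrow> ('w \<Rightarrow> 'a set) \<Rightarrow> 'a set \<Rightarrow> real" where
  "hitting P \<pi> A = measure P {\<omega> \<in> space P. \<pi> \<omega> \<inter> A \<noteq> {}}"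

definition sigma_fam :: "'a set set \<Rightarrow> 'a set set" where
  "sigma_fam E = {\<Union>F | F. F \<noteq> {} \<and> countable F \<and> F \<subseteq> E}"

definition delta_fam :: "'a set set \<Rightarrow> 'a set set" where
  "delta_fam E = {\<Inter>F | F. F \<noteq> {} \<and> countable F \<and> F \<subseteq> E}"

definition ext_fam :: "'a set set \<Rightarrow> 'a set set" where
  "ext_fam E = sigma_fam E"

definition int_fam :: "'a set \<Rightarrow> 'a set set \<Rightarrow> 'a set set" where
  "int_fam S E = {\<Inter>n. S - En n | En. \<forall>n::nat. En n \<in> E}"

end

theory Submission
  imports Defs
begin

lemma sigma_famI: "F \<noteq> {} \<Longrightarrow> countable F \<Longrightarrow> F \<subseteq> E \<Longrightarrow> X = \<Union>F \<Longrightarrow> X \<in> sigma_fam E"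
  unfolding sigma_fam_def mem_Collect_eq by (rule exI[where x=F]) simp

lemma delta_famI: "F \<noteq> {} \<Longrightarrow> countable F \<Longrightarrow> F \<subseteq> E \<Longrightarrow> X = \<Inter>F \<Longrightarrow> X \<in> delta_fam E"
  unfolding delta_fam_def mem_Collect_eq by (rule exI[where x=F]) simp

lemma int_famI: "(\<And>n::nat. En n \<in> E) \<Longrightarrow> X = (\<Inter>n. S - En n) \<Longrightarrow> X \<in> int_fam S E"
  unfolding int_fam_def mem_Collect_eq by (rule exI[where x=En]) simp

lemma sigma_fam_iff: "X \<in> sigma_fam E \<longleftrightarrow> (\<exists>f::nat \<Rightarrow> _. range f \<subseteq> E \<and> X = \<Union>(range f))"
proof
  assume "X \<in> sigma_fam E"
  then have "\<exists>F. X = \<Union>F \<and> F \<noteq> {} \<and> countable F \<and> F \<subseteq> E"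
    unfolding sigma_fam_def mem_Collect_eq by metis
  then obtain F where F: "F \<noteq> {}" "countable F" "F \<subseteq> E" "X = \<Union>F"
    by blast
  have r: "range (from_nat_into F) = F" using F(1,2) by (rule range_from_nat_into)
  show "\<exists>f::nat \<Rightarrow> _. range f \<subseteq> E \<and> X = \<Union>(range f)"
    by (rule exI[where x="from_nat_into F"]) (use r F in simp)
next
  assume "\<exists>f::nat \<Rightarrow> _. range f \<subseteq> E \<and> X = \<Union>(range f)"
  then obtain f :: "nat \<Rightarrow> _" where f: "range f \<subseteq> E" "X = \<Union>(range f)" by blast
  show "X \<in> sigma_fam E"
    by (rule sigma_famI[where F="range f"]) (simp_all add: f)
qed

lemma sigma_fam_UN:
  assumes "\<And>n::nat. X n \<in> sigma_fam E"
  shows "(\<Union>n. X n) \<in> sigma_fam E"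
proof -
  have "\<forall>n. \<exists>F. F \<noteq> {} \<and> countable F \<and> F \<subseteq> E \<and> X n = \<Union>F"
    using assms unfolding sigma_fam_def mem_Collect_eq by metis
  then have "\<exists>F. \<forall>n. F n \<noteq> {} \<and> countable (F n) \<and> F n \<subseteq> E \<and> X n = \<Union>(F n)"
    by (rule choice)
  then obtain F where F: "\<And>n. F n \<noteq> {} \<and> countable (F n) \<and> F n \<subseteq> E \<and> X n = \<Union>(F n)"
    by blast
  have "(\<Union>n. X n) = \<Union>(\<Union>n. F n)" using F by auto
  moreover have "(\<Union>n. F n) \<noteq> {}" "countable (\<Union>n. F n)" "(\<Union>n. F n) \<subseteq> E"
    using F by auto
  ultimately show ?thesis using sigma_famI[where F="\<Union>n. F n"] by metis
qed

lemma int_fam_union: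
  assumes "X \<in> int_fam S E" "Y \<in> int_fam S E"
    and st: "\<And>a b. a \<in> E \<Longrightarrow> b \<in> E \<Longrightarrow> a \<inter> b \<in> E"
  shows "X \<union> Y \<in> int_fam S E"
proof -
  have "\<exists>a::nat\<Rightarrow>_. (\<forall>n. a n \<in> E) \<and> X = (\<Inter>n. S - a n)"
    using assms(1) unfolding int_fam_def mem_Collect_eq by blast
  then obtain a :: "nat \<Rightarrow> _" where a: "\<And>n. a n \<in> E" "X = (\<Inter>n. S - a n)"
    by blast
  have "\<exists>b::nat\<Rightarrow>_. (\<forall>n. b n \<in> E) \<and> Y = (\<Inter>n. S - b n)"
    using assms(2) unfolding int_fam_def mem_Collect_eq by blast
  then obtain b :: "nat \<Rightarrow> _" where b: "\<And>n. b n \<in> E" "Y = (\<Inter>n. S - b n)"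
    by blast
  define c where "c n = a (fst (prod_decode n)) \<inter> b (snd (prod_decode n))" for n
  have c: "\<And>n. c n \<in> E" unfolding c_def using a b st by auto
  have "X \<union> Y = (\<Inter>n. S - c n)"
  proof (intro equalityI subsetI)
    fix x assume "x \<in> X \<union> Y" then show "x \<in> (\<Inter>n. S - c n)"
      unfolding a b c_def by auto
  next
    fix x assume x: "x \<in> (\<Inter>n. S - c n)"
    show "x \<in> X \<union> Y"
    proof (rule ccontr)
      assume "x \<notin> X \<union> Y"
      with x obtain i j where "x \<in> a i" "x \<in> b j" unfolding a b by auto
      then have "x \<in> c (prod_encode (i, j))" unfolding c_def by simp
      with x show False by auto
    qed
  qed
  then show ?thesis using c by (intro int_famI[where En=c]) auto
qed


lemma space_in_sigma_fam:
  assumes EM: "E \<subseteq> Pow S" and e0: "{} \<in> E"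
    and Eint: "E \<subseteq> sigma_fam (int_fam S E)"
  shows "S \<in> sigma_fam E"
proof -
  have "{} \<in> sigma_fam (int_fam S E)" using e0 Eint by blast
  then have "\<exists>F. {} = \<Union>F \<and> F \<noteq> {} \<and> countable F \<and> F \<subseteq> int_fam S E"
    unfolding sigma_fam_def mem_Collect_eq by blast
  then obtain F where F: "{} = \<Union>F" "F \<noteq> {}" "F \<subseteq> int_fam S E" by blast
  then obtain f where f: "f \<in> F" by blast
  with F have f0: "f = {}" by blast
  from f F have "f \<in> int_fam S E" by blast
  then have "\<exists>a::nat\<Rightarrow>_. (\<forall>n. a n \<in> E) \<and> f = (\<Inter>n. S - a n)"
    unfolding int_fam_def mem_Collect_eq by blast
  then obtain a :: "nat \<Rightarrow> _" where a: "\<And>n. a n \<in> E" "f = (\<Inter>n. S - a n)" by blast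
  have "S = \<Union>(range a)"
  proof
    show "S \<subseteq> \<Union>(range a)" using a(2) f0 by blast
    show "\<Union>(range a) \<subseteq> S" using a(1) EM by blast
  qed
  then show ?thesis using a(1) by (intro sigma_famI[where F="range a"]) auto
qed

lemma int_fam_sets:
  assumes sM: "sets M = sigma_sets (space M) E" and EM: "E \<subseteq> Pow (space M)"
    and X: "X \<in> int_fam (space M) E"
  shows "X \<in> sets M"
proof -
  have "\<exists>a::nat\<Rightarrow>_. (\<forall>n. a n \<in> E) \<and> X = (\<Inter>n. space M - a n)"
    using X unfolding int_fam_def mem_Collect_eq by blast
  then obtain a :: "nat \<Rightarrow> _" where a: "\<And>n. a n \<in> E" "X = (\<Inter>n. space M - a n)" by blast
  have an: "a n \<in> sets M" for n using a(1) sM by (simp add: sigma_sets.Basic)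
  have xeq: "X = space M - (\<Union>n. a n)" unfolding a(2) by blast
  have u: "(\<Union>n. a n) \<in> sets M" by (rule sets.countable_UN) (use an in blast)
  have "space M - (\<Union>n. a n) \<in> sets M" using sets.Diff[OF sets.top u] .
  then show ?thesis using xeq by simp
qed

lemma sigma_fam_sets:
  assumes sM: "sets M = sigma_sets (space M) E"
    and X: "X \<in> sigma_fam E"
  shows "X \<in> sets M"
proof -
  obtain f :: "nat \<Rightarrow> _" where f: "range f \<subseteq> E" "X = \<Union>(range f)"
    using X[unfolded sigma_fam_iff] by blast
  have fn: "f n \<in> sets M" for n using f(1) sM by (auto simp add: sigma_sets.Basic)
  have "(\<Union>n. f n) \<in> sets M" by (rule sets.countable_UN) (use fn in blast)
  then show ?thesis using f(2) by simp
qed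

lemma Ncount_zero: "Ncount B X = 0 \<longleftrightarrow> B \<inter> X = {}"
  unfolding Ncount_def by (auto simp: zero_enat_def)

lemma cr_event_sets:
  assumes "cr_set P M \<pi>" and B: "B \<in> sets M"
  shows "{\<omega> \<in> space P. \<pi> \<omega> \<inter> B \<noteq> {}} \<in> sets P"
proof -
  let ?G = "{Ncount A -` C \<inter> csets (space M) | A C. A \<in> sets M}"
  have G: "?G \<subseteq> Pow (csets (space M))" by blast
  have m: "\<pi> \<in> measurable P (cr_space M)" using assms(1) unfolding cr_set_def .
  have sp: "space (cr_space M) = csets (space M)"
    unfolding cr_space_def using space_measure_of[OF G] .
  have ss: "sets (cr_space M) = sigma_sets (csets (space M)) ?G"
    unfolding cr_space_def using sets_measure_of[OF G] .
  define Z where "Z = Ncount B -` {0} \<inter> csets (space M)"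
  have "Z \<in> ?G" unfolding Z_def using B by blast
  then have "Z \<in> sets (cr_space M)" unfolding ss by (rule sigma_sets.Basic)
  then have "\<pi> -` Z \<inter> space P \<in> sets P" by (rule measurable_sets[OF m])
  then have "space P - (\<pi> -` Z \<inter> space P) \<in> sets P" by auto
  moreover have "space P - (\<pi> -` Z \<inter> space P) = {\<omega> \<in> space P. \<pi> \<omega> \<inter> B \<noteq> {}}"
  proof -
    have "\<pi> \<omega> \<in> csets (space M)" if "\<omega> \<in> space P" for \<omega>
      using measurable_space[OF m that] sp by simp
    then show ?thesis by (auto simp: Z_def Ncount_zero)
  qed
  ultimately show ?thesis by simp
qed


lemma finite_dec_event:
  assumes fin: "finite R" and dec: "decseq B" and empty: "(\<Inter>n. B n) = {}"
    and hit: "\<And>n::nat. R \<inter> B n \<noteq> {}"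
  shows False
proof -
  have "\<forall>x\<in>R. \<exists>n. x \<notin> B n" using empty by blast
  then obtain g where g: "\<And>x. x \<in> R \<Longrightarrow> x \<notin> B (g x)" by metis
  define N where "N = Max (g ` R)"
  have "R \<inter> B N = {}"
  proof (rule ccontr)
    assume "R \<inter> B N \<noteq> {}"
    then obtain x where x: "x \<in> R" "x \<in> B N" by blast
    have "g x \<le> N" unfolding N_def using fin x(1) by simp
    then have "B N \<subseteq> B (g x)" using dec by (simp add: decseq_def)
    with x g show False by blast
  qed
  with hit show False by blast
qed

lemma capacity_facts:
  fixes P :: "'w measure" and \<rho> :: "'w \<Rightarrow> 'a set" and M :: "'a measure"
  assumes P: "prob_space P"
    and fin: "\<And>\<omega>. \<omega> \<in> space P \<Longrightarrow> finite (\<rho> \<omega>)"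
    and meas: "\<And>B. B \<in> sets M \<Longrightarrow> {\<omega> \<in> space P. \<rho> \<omega> \<inter> B \<noteq> {}} \<in> sets P"
  defines "C \<equiv> \<lambda>B. measure P {\<omega> \<in> space P. \<rho> \<omega> \<inter> B \<noteq> {}}"
  shows cap_mono: "\<And>B B'. B \<subseteq> B' \<Longrightarrow> B' \<in> sets M \<Longrightarrow> C B \<le> C B'"
    and cap_un: "\<And>B B'. B \<in> sets M \<Longrightarrow> B' \<in> sets M \<Longrightarrow> C (B \<union> B') \<le> C B + C B'"
    and cap_empty: "C {} = 0"
    and cap_dec: "\<And>B. (\<And>n::nat. B n \<in> sets M) \<Longrightarrow> decseq B \<Longrightarrow> (\<Inter>n. B n) = {} \<Longrightarrow>
                   (\<lambda>n. C (B n)) \<longlonglongrightarrow> 0"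
    and cap_cnt: "\<And>B \<delta>. (\<And>n::nat. B n \<in> sets M) \<Longrightarrow> (\<And>n. C (B n) \<le> \<delta> n) \<Longrightarrow> summable \<delta> \<Longrightarrow>
                   C (\<Union>n. B n) \<le> suminf \<delta>"
proof -
  interpret prob_space P by (rule P)
  let ?ev = "\<lambda>B. {\<omega> \<in> space P. \<rho> \<omega> \<inter> B \<noteq> {}}"
  show "C B \<le> C B'" if "B \<subseteq> B'" "B' \<in> sets M" for B B'
  proof -
    have "?ev B \<subseteq> ?ev B'" using that(1) by blast
    then show ?thesis unfolding C_def by (rule finite_measure_mono) (rule meas[OF that(2)])
  qed
  show "C (B \<union> B') \<le> C B + C B'" if "B \<in> sets M" "B' \<in> sets M" for B B'
  proof -
    have "?ev (B \<union> B') = ?ev B \<union> ?ev B'" by blast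
    then show ?thesis unfolding C_def using measure_Un_le[OF meas[OF that(1)] meas[OF that(2)]]
      by simp
  qed
  show "C {} = 0" unfolding C_def by simp
  show "(\<lambda>n. C (B n)) \<longlonglongrightarrow> 0" if B: "\<And>n::nat. B n \<in> sets M" "decseq B" "(\<Inter>n. B n) = {}" for B
  proof -
    have r: "range (\<lambda>n. ?ev (B n)) \<subseteq> sets P" using meas B(1) by blast
    have d: "decseq (\<lambda>n. ?ev (B n))"
      using B(2) unfolding decseq_def by blast
    have e: "(\<Inter>n. ?ev (B n)) = {}"
    proof (rule ccontr)
      assume "(\<Inter>n. ?ev (B n)) \<noteq> {}"
      then obtain \<omega> where "\<omega> \<in> (\<Inter>n. ?ev (B n))" by blast
      then have w: "\<omega> \<in> space P" "\<And>n. \<rho> \<omega> \<inter> B n \<noteq> {}" by auto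
      show False by (rule finite_dec_event[OF fin[OF w(1)] B(2) B(3) w(2)])
    qed
    have "(\<lambda>n. measure P (?ev (B n))) \<longlonglongrightarrow> measure P (\<Inter>n. ?ev (B n))"
      by (rule finite_Lim_measure_decseq[OF r d])
    then show ?thesis unfolding C_def e by simp
  qed
  show "C (\<Union>n. B n) \<le> suminf \<delta>"
    if B: "\<And>n::nat. B n \<in> sets M" "\<And>n. C (B n) \<le> \<delta> n" "summable \<delta>" for B \<delta>
  proof -
    have r: "range (\<lambda>n. ?ev (B n)) \<subseteq> sets P" using meas B(1) by blast
    have s: "summable (\<lambda>n. C (B n))"
    proof (rule summable_comparison_test'[OF B(3)])
      fix n show "norm (C (B n)) \<le> \<delta> n" using B(2)[of n] unfolding C_def by simp
    qed
    have eq: "?ev (\<Union>n. B n) = (\<Union>n. ?ev (B n))" by blast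
    have "C (\<Union>n. B n) \<le> (\<Sum>n. C (B n))"
      unfolding C_def eq using finite_measure_subadditive_countably[OF r] s unfolding C_def by simp
    also have "\<dots> \<le> suminf \<delta>" by (rule suminf_le[OF B(2) s B(3)])
    finally show ?thesis .
  qed
qed


lemma UN_int_fam:
  assumes st: "\<And>a b. a \<in> E \<Longrightarrow> b \<in> E \<Longrightarrow> a \<inter> b \<in> E"
    and f: "\<And>n. f n \<in> int_fam S E"
  shows "(\<Union>n\<in>{..(N::nat)}. f n) \<in> int_fam S E"
proof (induction N)
  case 0 then show ?case using f by simp
next
  case (Suc N)
  have "(\<Union>n\<in>{..Suc N}. f n) = (\<Union>n\<in>{..N}. f n) \<union> f (Suc N)"
    by (auto simp: atMost_Suc)
  then show ?case using int_fam_union[OF Suc f st] by simp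
qed

lemma approx:
  fixes P :: "'w measure" and M :: "'a measure" and E :: "'a set set"
    and \<rho> :: "'w \<Rightarrow> 'a set"
  assumes P: "prob_space P"
    and EM: "E \<subseteq> Pow (space M)"
    and st: "\<And>a b. a \<in> E \<Longrightarrow> b \<in> E \<Longrightarrow> a \<inter> b \<in> E"
    and sM: "sets M = sigma_sets (space M) E"
    and e0: "{} \<in> E"
    and Eint: "E \<subseteq> sigma_fam (int_fam (space M) E)"
    and fin: "\<And>\<omega>. \<omega> \<in> space P \<Longrightarrow> finite (\<rho> \<omega>)"
    and meas: "\<And>B. B \<in> sets M \<Longrightarrow> {\<omega> \<in> space P. \<rho> \<omega> \<inter> B \<noteq> {}} \<in> sets P"
    and A: "A \<in> sets M"
  shows "\<forall>\<epsilon>>0. \<exists>I\<in>int_fam (space M) E. \<exists>U\<in>sigma_fam E. I \<subseteq> A \<and> A \<subseteq> U \<and>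
           measure P {\<omega> \<in> space P. \<rho> \<omega> \<inter> (U - I) \<noteq> {}} < \<epsilon>"
proof -
  define S where "S = space M"
  define C where "C = (\<lambda>B. measure P {\<omega> \<in> space P. \<rho> \<omega> \<inter> B \<noteq> {}})"
  have cf1: "C B \<le> C B'" if "B \<subseteq> B'" "B' \<in> sets M" for B B'
    unfolding C_def by (rule capacity_facts(1)[OF P fin meas that])
  have cf2: "C (B \<union> B') \<le> C B + C B'" if "B \<in> sets M" "B' \<in> sets M" for B B'
    unfolding C_def by (rule capacity_facts(2)[OF P fin meas that])
  have cf3: "C {} = 0" unfolding C_def by simp
  have cf4: "(\<lambda>n. C (B n)) \<longlonglongrightarrow> 0"
    if "\<And>n::nat. B n \<in> sets M" "decseq B" "(\<Inter>n. B n) = {}" for B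
    unfolding C_def by (rule capacity_facts(4)[OF P fin meas that])
  have cf5: "C (\<Union>n. B n) \<le> suminf \<delta>"
    if "\<And>n::nat. B n \<in> sets M" "\<And>n. C (B n) \<le> \<delta> n" "summable \<delta>" for B \<delta>
    unfolding C_def by (rule capacity_facts(5)[OF P fin meas that[unfolded C_def]])
  have intS: "X \<in> sets M" if "X \<in> int_fam S E" for X
    using int_fam_sets[OF sM EM] that unfolding S_def by blast
  have sigS: "X \<in> sets M" if "X \<in> sigma_fam E" for X
    using sigma_fam_sets[OF sM] that by blast
  have ES: "X \<in> sets M" if "X \<in> E" for X using that sM by (simp add: sigma_sets.Basic)
  have A': "A \<in> sigma_sets S E" using A sM unfolding S_def by simp
  have "\<forall>\<epsilon>>0. \<exists>I\<in>int_fam S E. \<exists>U\<in>sigma_fam E. I \<subseteq> A \<and> A \<subseteq> U \<and> C (U - I) < \<epsilon>"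
    using A'
  proof (induction rule: sigma_sets.induct)
    case (Basic a)
    show ?case
    proof (intro allI impI)
      fix \<epsilon> :: real assume \<epsilon>: "\<epsilon> > 0"
      have "a \<in> sigma_fam (int_fam S E)" using Basic Eint unfolding S_def by blast
      then obtain f :: "nat \<Rightarrow> _" where f: "range f \<subseteq> int_fam S E" "a = \<Union>(range f)"
        unfolding sigma_fam_iff by blast
      have fI: "f n \<in> int_fam S E" for n using f(1) by (simp add: image_subset_iff)
      define J where "J N = (\<Union>n\<in>{..N}. f n)" for N
      have J: "J N \<in> int_fam S E" for N unfolding J_def
        by (rule UN_int_fam[OF st fI])
      have aS: "a \<in> sets M" using ES Basic by blast
      have Bs: "a - J n \<in> sets M" for n using aS intS[OF J] by blast
      have dec: "decseq (\<lambda>n. a - J n)" unfolding decseq_def J_def by auto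
      have emp: "(\<Inter>n. a - J n) = {}" unfolding J_def f(2) by auto
      have "(\<lambda>n. C (a - J n)) \<longlonglongrightarrow> 0" by (rule cf4[OF Bs dec emp])
      then have "eventually (\<lambda>n. C (a - J n) < \<epsilon>) sequentially"
        using \<epsilon> by (rule order_tendstoD(2))
      then obtain N where N: "C (a - J N) < \<epsilon>" unfolding eventually_sequentially by blast
      have aU: "a \<in> sigma_fam E" using Basic by (intro sigma_famI[where F="{a}"]) auto
      have "J N \<subseteq> a" unfolding J_def f(2) by blast
      then show "\<exists>I\<in>int_fam S E. \<exists>U\<in>sigma_fam E. I \<subseteq> a \<and> a \<subseteq> U \<and> C (U - I) < \<epsilon>"
        using J aU N by blast
    qed
  next
    case Empty
    show ?case
    proof (intro allI impI)
      fix \<epsilon> :: real assume \<epsilon>: "\<epsilon> > 0"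
      have "S \<in> sigma_fam E" using space_in_sigma_fam[OF EM e0 Eint] unfolding S_def .
      then obtain f :: "nat \<Rightarrow> _" where f: "range f \<subseteq> E" "S = \<Union>(range f)"
        unfolding sigma_fam_iff by blast
      have I: "{} \<in> int_fam S E"
        by (rule int_famI[where En=f]) (use f in auto)
      have U: "{} \<in> sigma_fam E" using e0 by (intro sigma_famI[where F="{{}}"]) auto
      show "\<exists>I\<in>int_fam S E. \<exists>U\<in>sigma_fam E. I \<subseteq> {} \<and> {} \<subseteq> U \<and> C (U - I) < \<epsilon>"
      proof -
        have "C ({} - {}) < \<epsilon>" using cf3 \<epsilon> by simp
        then show ?thesis using I U by blast
      qed
    qed
  next
    case (Compl a)
    show ?case
    proof (intro allI impI)
      fix \<epsilon> :: real assume \<epsilon>: "\<epsilon> > 0"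
      then obtain I U where IU: "I \<in> int_fam S E" "U \<in> sigma_fam E" "I \<subseteq> a" "a \<subseteq> U"
        "C (U - I) < \<epsilon>" using Compl.IH by blast
      obtain f :: "nat \<Rightarrow> _" where f: "range f \<subseteq> E" "U = \<Union>(range f)"
        using IU(2) unfolding sigma_fam_iff by blast
      have "\<exists>b::nat\<Rightarrow>_. (\<forall>n. b n \<in> E) \<and> I = (\<Inter>n. S - b n)"
        using IU(1) unfolding int_fam_def mem_Collect_eq by blast
      then obtain b :: "nat \<Rightarrow> _" where b: "\<And>n. b n \<in> E" "I = (\<Inter>n. S - b n)" by blast
      have I': "S - U \<in> int_fam S E"
        by (rule int_famI[where En=f]) (use f in auto)
      have bS: "b n \<subseteq> S" for n using b(1) EM unfolding S_def by blast
      have "S - I = \<Union>(range b)" unfolding b(2) using bS by blast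
      then have U': "S - I \<in> sigma_fam E" using b(1)
        by (intro sigma_famI[where F="range b"]) auto
      have "(S - I) - (S - U) \<subseteq> U - I" by blast
      then have "C ((S - I) - (S - U)) \<le> C (U - I)"
        using cf1 sigS[OF IU(2)] intS[OF IU(1)] by blast
      then have "C ((S - I) - (S - U)) < \<epsilon>" using IU(5) by linarith
      moreover have "S - U \<subseteq> S - a" "S - a \<subseteq> S - I" using IU(3,4) by auto
      ultimately show "\<exists>I\<in>int_fam S E. \<exists>U\<in>sigma_fam E. I \<subseteq> S - a \<and> S - a \<subseteq> U \<and> C (U - I) < \<epsilon>"
        using I' U' by blast
    qed
  next
    case (Union a)
    show ?case
    proof (intro allI impI)
      fix \<epsilon> :: real assume \<epsilon>: "\<epsilon> > 0"
      define \<delta> where "\<delta> n = \<epsilon> / 4 * (1/2) ^ n" for n :: nat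
      have \<delta>pos: "\<delta> n > 0" for n unfolding \<delta>_def using \<epsilon> by simp
      have "\<forall>n. \<exists>I. \<exists>U. I \<in> int_fam S E \<and> U \<in> sigma_fam E \<and> I \<subseteq> a n \<and> a n \<subseteq> U \<and> C (U - I) < \<delta> n"
        using Union.IH \<delta>pos by blast
      then have "\<exists>I. \<forall>n. \<exists>U. I n \<in> int_fam S E \<and> U \<in> sigma_fam E \<and> I n \<subseteq> a n \<and> a n \<subseteq> U \<and> C (U - I n) < \<delta> n"
        by (rule choice)
      then obtain I where "\<forall>n. \<exists>U. I n \<in> int_fam S E \<and> U \<in> sigma_fam E \<and> I n \<subseteq> a n \<and> a n \<subseteq> U \<and> C (U - I n) < \<delta> n"
        by blast
      then have "\<exists>U. \<forall>n. I n \<in> int_fam S E \<and> U n \<in> sigma_fam E \<and> I n \<subseteq> a n \<and> a n \<subseteq> U n \<and> C (U n - I n) < \<delta> n"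
        by (rule choice)
      then obtain U where IU: "\<And>n. I n \<in> int_fam S E" "\<And>n. U n \<in> sigma_fam E" "\<And>n. I n \<subseteq> a n"
        "\<And>n. a n \<subseteq> U n" "\<And>n. C (U n - I n) < \<delta> n"
        by blast
      define J where "J N = (\<Union>n\<in>{..N}. I n)" for N
      have J: "J N \<in> int_fam S E" for N unfolding J_def
        by (rule UN_int_fam[OF st IU(1)])
      define K where "K = (\<Union>n. I n)"
      have Ks: "K \<in> sets M" unfolding K_def
        by (rule sets.countable_UN) (use intS[OF IU(1)] in blast)
      have Bs: "K - J n \<in> sets M" for n using Ks intS[OF J] by blast
      have dec: "decseq (\<lambda>n. K - J n)" unfolding decseq_def J_def by auto
      have emp: "(\<Inter>n. K - J n) = {}" unfolding J_def K_def by auto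
      have "(\<lambda>n. C (K - J n)) \<longlonglongrightarrow> 0" by (rule cf4[OF Bs dec emp])
      then have "eventually (\<lambda>n. C (K - J n) < \<epsilon>/2) sequentially"
        using \<epsilon> by (intro order_tendstoD(2)) auto
      then obtain N where N: "C (K - J N) < \<epsilon>/2" unfolding eventually_sequentially by blast
      define U' where "U' = (\<Union>n. U n)"
      have U': "U' \<in> sigma_fam E" unfolding U'_def by (rule sigma_fam_UN[OF IU(2)])
      have Ds: "U n - I n \<in> sets M" for n using sigS[OF IU(2)] intS[OF IU(1)] by blast
      have sd: "summable \<delta>" unfolding \<delta>_def
        by (intro summable_mult summable_geometric) simp
      have sdv: "suminf \<delta> = \<epsilon> / 2" unfolding \<delta>_def
        by (subst suminf_mult) (simp_all add: suminf_geometric summable_geometric)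
      have c1: "C (\<Union>n. U n - I n) \<le> \<epsilon> / 2"
        using cf5[OF Ds less_imp_le[OF IU(5)] sd] sdv by simp
      have Dus: "(\<Union>n. U n - I n) \<in> sets M" by (rule sets.countable_UN) (use Ds in blast)
      have sub: "U' - J N \<subseteq> (\<Union>n. U n - I n) \<union> (K - J N)" unfolding U'_def K_def by blast
      have "C (U' - J N) \<le> C ((\<Union>n. U n - I n) \<union> (K - J N))"
        using cf1[OF sub] Dus Bs by blast
      also have "\<dots> \<le> C (\<Union>n. U n - I n) + C (K - J N)" using cf2[OF Dus Bs] .
      finally have "C (U' - J N) < \<epsilon>" using c1 N by linarith
      moreover have "J N \<subseteq> (\<Union>n. a n)" unfolding J_def using IU(3) by blast
      moreover have "(\<Union>n. a n) \<subseteq> U'" unfolding U'_def using IU(4) by blast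
      ultimately show "\<exists>I\<in>int_fam S E. \<exists>U\<in>sigma_fam E. I \<subseteq> (\<Union>n. a n) \<and> (\<Union>n. a n) \<subseteq> U \<and> C (U - I) < \<epsilon>"
        using J U' by blast
    qed
  qed
  then show ?thesis unfolding C_def S_def .
qed


theorem lemma5p6:
  fixes P :: "'w measure" and M :: "'a measure" and E :: "'a set set"
    and \<pi> :: "'w \<Rightarrow> 'a set"
  assumes "prob_space P"
    and "E \<subseteq> Pow (space M)"
    and "\<And>a b. a \<in> E \<Longrightarrow> b \<in> E \<Longrightarrow> a \<inter> b \<in> E"
    and "sets M = sigma_sets (space M) E"
    and "{} \<in> E"
    and "E \<subseteq> sigma_fam (int_fam (space M) E)"
    and "cr_set P M \<pi>"
    and "constructive P M \<pi>"
  shows "\<forall>A \<in> sets M. \<exists>K \<in> sigma_fam (int_fam (space M) E).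
           \<exists>L \<in> delta_fam (ext_fam E).
             K \<subseteq> A \<and> A \<subseteq> L \<and> hitting P \<pi> (L - K) = 0"
proof
  fix A assume A: "A \<in> sets M"
  note P = assms(1) and EM = assms(2) and st = assms(3) and sM = assms(4) and e0 = assms(5)
    and Eint = assms(6)
  interpret prob_space P by (rule P)
  obtain \<pi>s :: "nat \<Rightarrow> 'w \<Rightarrow> 'a set" where pis: "\<And>k. finite_cr_set P M (\<pi>s k)"
    "\<And>\<omega>. \<omega> \<in> space P \<Longrightarrow> \<pi> \<omega> = (\<Union>k. \<pi>s k \<omega>)"
    using assms(8) unfolding constructive_def by blast
  define \<rho> where "\<rho> N \<omega> = (\<Union>k\<in>{..N}. \<pi>s k \<omega>)" for N \<omega>
  define ev where "ev N X = {\<omega> \<in> space P. \<rho> N \<omega> \<inter> X \<noteq> {}}" for N X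
  have finr: "finite (\<rho> N \<omega>)" if "\<omega> \<in> space P" for N \<omega>
    using pis(1) that unfolding \<rho>_def finite_cr_set_def by auto
  have measr: "{\<omega> \<in> space P. \<rho> N \<omega> \<inter> B \<noteq> {}} \<in> sets P" if B: "B \<in> sets M" for N B
  proof -
    have k: "{\<omega> \<in> space P. \<pi>s k \<omega> \<inter> B \<noteq> {}} \<in> sets P" for k
      using cr_event_sets[OF _ B] pis(1) unfolding finite_cr_set_def by blast
    have "{\<omega> \<in> space P. \<rho> N \<omega> \<inter> B \<noteq> {}} = (\<Union>k\<in>{..N}. {\<omega> \<in> space P. \<pi>s k \<omega> \<inter> B \<noteq> {}})"
      unfolding \<rho>_def by blast
    also have "\<dots> \<in> sets P" using k by blast
    finally show ?thesis .
  qed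
  have "\<forall>N. \<exists>I U. I \<in> int_fam (space M) E \<and> U \<in> sigma_fam E \<and> I \<subseteq> A \<and> A \<subseteq> U \<and>
           measure P (ev N (U - I)) < 1 / real (Suc N)"
  proof
    fix N
    have "\<forall>\<epsilon>>0. \<exists>I\<in>int_fam (space M) E. \<exists>U\<in>sigma_fam E. I \<subseteq> A \<and> A \<subseteq> U \<and>
           measure P {\<omega> \<in> space P. \<rho> N \<omega> \<inter> (U - I) \<noteq> {}} < \<epsilon>"
      by (rule approx[OF P EM st sM e0 Eint finr measr A])
    moreover have pos: "(0::real) < 1 / real (Suc N)" by simp
    ultimately obtain I U where "I \<in> int_fam (space M) E" "U \<in> sigma_fam E" "I \<subseteq> A" "A \<subseteq> U"
      "measure P {\<omega> \<in> space P. \<rho> N \<omega> \<inter> (U - I) \<noteq> {}} < 1 / real (Suc N)"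
      by meson
    then show "\<exists>I U. I \<in> int_fam (space M) E \<and> U \<in> sigma_fam E \<and> I \<subseteq> A \<and> A \<subseteq> U \<and>
           measure P (ev N (U - I)) < 1 / real (Suc N)"
      unfolding ev_def by blast
  qed
  then have "\<exists>I. \<forall>N. \<exists>U. I N \<in> int_fam (space M) E \<and> U \<in> sigma_fam E \<and> I N \<subseteq> A \<and> A \<subseteq> U \<and>
           measure P (ev N (U - I N)) < 1 / real (Suc N)" by (rule choice)
  then obtain I where "\<forall>N. \<exists>U. I N \<in> int_fam (space M) E \<and> U \<in> sigma_fam E \<and> I N \<subseteq> A \<and> A \<subseteq> U \<and>
           measure P (ev N (U - I N)) < 1 / real (Suc N)" by blast
  then have "\<exists>U. \<forall>N. I N \<in> int_fam (space M) E \<and> U N \<in> sigma_fam E \<and> I N \<subseteq> A \<and> A \<subseteq> U N \<and>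
           measure P (ev N (U N - I N)) < 1 / real (Suc N)" by (rule choice)
  then obtain U where IU: "\<And>N. I N \<in> int_fam (space M) E" "\<And>N. U N \<in> sigma_fam E"
    "\<And>N. I N \<subseteq> A" "\<And>N. A \<subseteq> U N" "\<And>N. measure P (ev N (U N - I N)) < 1 / real (Suc N)"
    by blast
  define K where "K = (\<Union>N. I N)"
  define L where "L = (\<Inter>N. U N)"
  have K: "K \<in> sigma_fam (int_fam (space M) E)" unfolding K_def
    by (rule sigma_famI[where F="range I"]) (use IU(1) in auto)
  have L: "L \<in> delta_fam (ext_fam E)" unfolding L_def ext_fam_def
    by (rule delta_famI[where F="range U"]) (use IU(2) in auto)
  have KA: "K \<subseteq> A" unfolding K_def using IU(3) by blast
  have AL: "A \<subseteq> L" unfolding L_def using IU(4) by blast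
  have Is: "I N \<in> sets M" for N by (rule int_fam_sets[OF sM EM IU(1)])
  have Us: "U N \<in> sets M" for N by (rule sigma_fam_sets[OF sM IU(2)])
  have Ks: "K \<in> sets M" unfolding K_def by (rule sets.countable_UN) (use Is in blast)
  have USp: "U N \<subseteq> space M" for N using Us sets.sets_into_space by blast
  have "L = space M - (\<Union>N. space M - U N)" unfolding L_def using USp by blast
  moreover have "(\<Union>N. space M - U N) \<in> sets M" by (rule sets.countable_UN) (use Us in blast)
  ultimately have Ls: "L \<in> sets M" by simp
  have LKs: "L - K \<in> sets M" using Ls Ks by blast
  have evs: "ev N (L - K) \<in> sets P" for N unfolding ev_def by (rule measr[OF LKs])
  have ev0: "measure P (ev N (L - K)) = 0" for N
  proof (rule ccontr)
    assume "measure P (ev N (L - K)) \<noteq> 0"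
    then have pos: "measure P (ev N (L - K)) > 0" using measure_nonneg[of P] by (simp add: order_less_le)
    then obtain n where n: "inverse (real (Suc n)) < measure P (ev N (L - K))"
      using reals_Archimedean[OF pos] by blast
    define m where "m = n + N"
    have "ev N (L - K) \<subseteq> ev m (U m - I m)"
      unfolding ev_def \<rho>_def m_def K_def L_def by fastforce
    then have "measure P (ev N (L - K)) \<le> measure P (ev m (U m - I m))"
      using finite_measure_mono measr[OF sets.Diff[OF Us Is]] unfolding ev_def by blast
    also have "\<dots> < 1 / real (Suc m)" by (rule IU(5))
    also have "\<dots> \<le> inverse (real (Suc n))" unfolding m_def
      by (simp add: inverse_eq_divide frac_le)
    finally show False using n by linarith
  qed
  have eq: "{\<omega> \<in> space P. \<pi> \<omega> \<inter> (L - K) \<noteq> {}} = (\<Union>N. ev N (L - K))"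
  proof (intro equalityI subsetI)
    fix \<omega> assume w: "\<omega> \<in> {\<omega> \<in> space P. \<pi> \<omega> \<inter> (L - K) \<noteq> {}}"
    then obtain x where x: "x \<in> \<pi> \<omega>" "x \<in> L - K" by blast
    with pis(2) w obtain k where "x \<in> \<pi>s k \<omega>" by auto
    then have "\<omega> \<in> ev k (L - K)" using w x unfolding ev_def \<rho>_def by blast
    then show "\<omega> \<in> (\<Union>N. ev N (L - K))" by blast
  next
    fix \<omega> assume "\<omega> \<in> (\<Union>N. ev N (L - K))"
    then obtain N where "\<omega> \<in> ev N (L - K)" by blast
    then show "\<omega> \<in> {\<omega> \<in> space P. \<pi> \<omega> \<inter> (L - K) \<noteq> {}}"
      unfolding ev_def \<rho>_def using pis(2) by auto
  qed
  have "measure P (\<Union>N. ev N (L - K)) \<le> (\<Sum>N. measure P (ev N (L - K)))"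
    by (rule finite_measure_subadditive_countably) (use evs ev0 in auto)
  then have "measure P (\<Union>N. ev N (L - K)) = 0" using ev0 measure_nonneg[of P] by (simp add: measure_le_0_iff)
  then have "hitting P \<pi> (L - K) = 0" unfolding hitting_def eq .
  then show "\<exists>K \<in> sigma_fam (int_fam (space M) E). \<exists>L \<in> delta_fam (ext_fam E).
             K \<subseteq> A \<and> A \<subseteq> L \<and> hitting P \<pi> (L - K) = 0"
    using K L KA AL by blast
qed

end
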